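(* (i) For all contexts $\Gamma,\Delta$: if $\Gamma\approx_\alpha\Delta$ and $\Gamma\ \mathrm{ok}$ then $\Delta\ \mathrm{ok}$. (ii) For all contexts $\Gamma,\Delta$ and terms $M,N,A$: if $\Gamma\approx_\alpha\Delta$, $M\sim_\alpha N$ and $\Gamma\vdash M:A$, then $\Delta\vdash N:A$.
   Context: Let $\mathcal V$ (the variables) be a type with decidable equality, equipped with functions $\mathrm{encode}:\mathcal V\to\mathbb N$ and $\mathrm{decode}:\mathbb N\to\mathcal V$ such that $\mathrm{encode}(\mathrm{decode}\,n)=n$ for all $n$. Let $\mathcal C$ (the constants) be any type. Terms $\Lambda$ are generated by: $c\,k$ ($k\in\mathcal C$), $v\,x$ ($x\in\mathcal V$), $\lambda[x:A]M$, $\Pi[x:A]B$ and $M\cdot N$; in $\lambda[x:A]M$ and $\Pi[x:A]B$ the name $x$ binds in $M$ (resp. $B$) but not in $A$. Terms are raw first-order syntax (not identified up to renaming of bound variables) and $\equiv$ denotes syntactic identity. The list of free variables is $\mathrm{fv}(c\,k)=[\,]$, $\mathrm{fv}(v\,x)=[x]$, $\mathrm{fv}(\lambda[x:A]M)=\mathrm{fv}\,A\mathbin{+\!\!+}(\mathrm{fv}\,M-x)$, $\mathrm{fv}(\Pi[x:A]B)=\mathrm{fv}\,A\mathbin{+\!\!+}(\mathrm{fv}\,B-x)$, $\mathrm{fv}(M\cdot N)=\mathrm{fv}\,M\mathbin{+\!\!+}\mathrm{fv}\,N$, where $\mathbin{+\!\!+}$ is list concatenation and $xs-x$ deletes every occurrence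 of $x$ from $xs$. Fix a function $\chi':\mathrm{List}\,\mathbb N\to\mathbb N$ with $\chi'(ns)\notin ns$ for every list $ns$, and put $X'(xs)=\mathrm{decode}(\chi'(\mathrm{map}\ \mathrm{encode}\ xs))$. A substitution is any function $\sigma:\mathcal V\to\Lambda$; $\iota=v$ is the identity substitution; $(\sigma,x:=N)(y)=N$ if $y=x$ and $\sigma\,y$ otherwise. For a substitution $\sigma$ and a list $xs$ of variables, $X(\sigma,xs)=X'(\text{concatenation of the lists }\mathrm{fv}(\sigma\,y)\text{ for }y\in xs)$. The action $M\bullet\sigma$ is defined by structural recursion: $c\,k\bullet\sigma=c\,k$; $v\,x\bullet\sigma=\sigma\,x$; $(M\cdot N)\bullet\sigma=(M\bullet\sigma)\cdot(N\bullet\sigma)$; $(\lambda[x:A]M)\bullet\sigma=\lambda[y:A\bullet\sigma](M\bullet(\sigma,x:=v\,y))$ with $y=X(\sigma,\mathrm{fv}\,M-x)$; $(\Pi[x:A]B)\bullet\sigma=\Pi[y:A\bullet\sigma](B\bullet(\sigma,x:=v\,y))$ with $y=X(\sigma,\mathrm{fv}\,B-x)$. Unary substitution is $M[x:=N]=M\bullet(\iota,x:=N)$. $\alpha$-conversion $\sim_\alpha$ is the inductively defined relation with rules: $c\,k\sim_\alpha c\,k$; $v\,x\sim_\alpha v\,x$; $M\cdot N\sim_\alpha M'\cdot N'$ if $M\sim_\alpha M'$ and $N\sim_\alpha N'$; $\lambda[x:A]M\sim_\alpha\lambda[x':A']M'$ if $A\sim_\alpha A'$ and there is a variable $y$ with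 $y\notin\mathrm{fv}\,M-x$, $y\notin\mathrm{fv}\,M'-x'$ and $M[x:=v\,y]\equiv M'[x':=v\,y]$; and the same rule with $\Pi$ in place of $\lambda$. $\beta$-contraction is $(\lambda[x:A]M)\cdot N\ \triangleright_\beta\ M[x:=N]$. One-step $\beta$-reduction $\to_\beta$ is its contextual closure, inductively: $M\to_\beta N$ if $M\triangleright_\beta N$; $\lambda[x:A]M\to_\beta\lambda[x:A]M'$ and $\Pi[x:A]M\to_\beta\Pi[x:A]M'$ if $M\to_\beta M'$; $\lambda[x:A]M\to_\beta\lambda[x:A']M$ and $\Pi[x:A]M\to_\beta\Pi[x:A']M$ if $A\to_\beta A'$; $M\cdot P\to_\beta N\cdot P$ and $P\cdot M\to_\beta P\cdot N$ if $M\to_\beta N$. $\beta$-conversion $\simeq_\beta$ is the equivalence (reflexive–symmetric–transitive) closure of $\sim_\alpha\cup\to_\beta$. Pure Type System: fix a binary relation $\mathcal A\subseteq\mathcal C\times\mathcal C$ (axioms) and a ternary relation $\mathcal R\subseteq\mathcal C\times\mathcal C\times\mathcal C$ (rules). A context is a finite list of pairs $(x,A)$ with $x\in\mathcal V$, $A\in\Lambda$; $\Gamma,x:A$ denotes the list $(x,A)::\Gamma$; $\mathrm{dom}\,\Gamma$ is the list of first components; $(x,A)\in\Gamma$ is list membership. The judgments $\Gamma\ \mathrm{ok}$ and $\Gamma\vdash M:A$ are defined mutually inductively by: (nil) $[\,]\ \mathrm{ok}$; (cons) if $\Gamma\ \mathrm{ok}$, $\Gamma\vdash A:c\,s$ and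 $x\notin\mathrm{dom}\,\Gamma$ then $\Gamma,x:A\ \mathrm{ok}$; (sort) if $\Gamma\ \mathrm{ok}$ and $\mathcal A\,s_1\,s_2$ then $\Gamma\vdash c\,s_1:c\,s_2$; (var) if $\Gamma\ \mathrm{ok}$ and $(x,A)\in\Gamma$ then $\Gamma\vdash v\,x:A$; (prod) if $\mathcal R\,s_1\,s_2\,s_3$, $\Gamma\vdash A:c\,s_1$ and for every $y\notin\mathrm{dom}\,\Gamma$, $\Gamma,y:A\vdash B[x:=v\,y]:c\,s_2$, then $\Gamma\vdash\Pi[x:A]B:c\,s_3$; (abs) if $\mathcal R\,s_1\,s_2\,s_3$, $\Gamma\vdash A:c\,s_1$, for every $z\notin\mathrm{dom}\,\Gamma$, $\Gamma,z:A\vdash B[y:=v\,z]:c\,s_2$, and for every $z\notin\mathrm{dom}\,\Gamma$, $\Gamma,z:A\vdash M[x:=v\,z]:B[y:=v\,z]$, then $\Gamma\vdash\lambda[x:A]M:\Pi[y:A]B$; (app) if $\Gamma\vdash M:\Pi[x:A]B$, $\Gamma\vdash N:A$ and $\Gamma\vdash B[x:=N]:c\,s$ for some $s$, then $\Gamma\vdash M\cdot N:B[x:=N]$; (conv) if $\Gamma\vdash M:A$, $A\simeq_\beta B$ and $\Gamma\vdash B:c\,s$ for some $s$, then $\Gamma\vdash M:B$. (The premises quantified over all fresh names in (prod) and (abs) are infinitely branching.) $\Gamma\approx_\alpha\Delta$ means: $\Gamma$ and $\Delta$ have the same length and, position by position, the entries $(x,A)$ of $\Gamma$ and $(y,B)$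 of $\Delta$ satisfy $x=y$ and $A\sim_\alpha B$. *)

theory Defs
  imports Main
begin

datatype ('c, 'v) trm =
    Const 'c
  | Var 'v
  | Lam 'v "('c, 'v) trm" "('c, 'v) trm"   (* Lam x A M  =  lambda[x:A] M *)
  | Pi 'v "('c, 'v) trm" "('c, 'v) trm"    (* Pi x A B   =  Pi[x:A] B *)
  | App "('c, 'v) trm" "('c, 'v) trm"

primrec fv :: "('c, 'v) trm \<Rightarrow> 'v list" where
  "fv (Const k) = []"
| "fv (Var x) = [x]"
| "fv (Lam x A M) = fv A @ removeAll x (fv M)"
| "fv (Pi x A B) = fv A @ removeAll x (fv B)"
| "fv (App M N) = fv M @ fv N"

definition Xp :: "('v \<Rightarrow> nat) \<Rightarrow> (nat \<Rightarrow> 'v) \<Rightarrow> (nat list \<Rightarrow> nat) \<Rightarrow> 'v list \<Rightarrow> 'v" where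
  "Xp enc dec chi xs = dec (chi (map enc xs))"

definition Xs :: "('v \<Rightarrow> nat) \<Rightarrow> (nat \<Rightarrow> 'v) \<Rightarrow> (nat list \<Rightarrow> nat)
    \<Rightarrow> ('v \<Rightarrow> ('c, 'v) trm) \<Rightarrow> 'v list \<Rightarrow> 'v" where
  "Xs enc dec chi \<sigma> xs = Xp enc dec chi (concat (map (\<lambda>y. fv (\<sigma> y)) xs))"

definition supd :: "('v \<Rightarrow> ('c, 'v) trm) \<Rightarrow> 'v \<Rightarrow> ('c, 'v) trm \<Rightarrow> 'v \<Rightarrow> ('c, 'v) trm" where
  "supd \<sigma> x N = (\<lambda>y. if y = x then N else \<sigma> y)"

primrec sapp :: "('v \<Rightarrow> nat) \<Rightarrow> (nat \<Rightarrow> 'v) \<Rightarrow> (nat list \<Rightarrow> nat)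
    \<Rightarrow> ('c, 'v) trm \<Rightarrow> ('v \<Rightarrow> ('c, 'v) trm) \<Rightarrow> ('c, 'v) trm" where
  "sapp enc dec chi (Const k) \<sigma> = Const k"
| "sapp enc dec chi (Var x) \<sigma> = \<sigma> x"
| "sapp enc dec chi (App M N) \<sigma> = App (sapp enc dec chi M \<sigma>) (sapp enc dec chi N \<sigma>)"
| "sapp enc dec chi (Lam x A M) \<sigma> =
     (let y = Xs enc dec chi \<sigma> (removeAll x (fv M))
      in Lam y (sapp enc dec chi A \<sigma>) (sapp enc dec chi M (supd \<sigma> x (Var y))))"
| "sapp enc dec chi (Pi x A B) \<sigma> =
     (let y = Xs enc dec chi \<sigma> (removeAll x (fv B))
      in Pi y (sapp enc dec chi A \<sigma>) (sapp enc dec chi B (supd \<sigma> x (Var y))))"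

definition subst1 :: "('v \<Rightarrow> nat) \<Rightarrow> (nat \<Rightarrow> 'v) \<Rightarrow> (nat list \<Rightarrow> nat)
    \<Rightarrow> ('c, 'v) trm \<Rightarrow> 'v \<Rightarrow> ('c, 'v) trm \<Rightarrow> ('c, 'v) trm" where
  "subst1 enc dec chi M x N = sapp enc dec chi M (supd Var x N)"

inductive alpha :: "('v \<Rightarrow> nat) \<Rightarrow> (nat \<Rightarrow> 'v) \<Rightarrow> (nat list \<Rightarrow> nat)
    \<Rightarrow> ('c, 'v) trm \<Rightarrow> ('c, 'v) trm \<Rightarrow> bool"
  for enc dec chi where
  a_const: "alpha enc dec chi (Const k) (Const k)"
| a_var: "alpha enc dec chi (Var x) (Var x)"
| a_app: "alpha enc dec chi M M' \<Longrightarrow> alpha enc dec chi N N'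
          \<Longrightarrow> alpha enc dec chi (App M N) (App M' N')"
| a_lam: "alpha enc dec chi A A' \<Longrightarrow> y \<notin> set (removeAll x (fv M)) \<Longrightarrow>
          y \<notin> set (removeAll x' (fv M')) \<Longrightarrow>
          subst1 enc dec chi M x (Var y) = subst1 enc dec chi M' x' (Var y) \<Longrightarrow>
          alpha enc dec chi (Lam x A M) (Lam x' A' M')"
| a_pi: "alpha enc dec chi A A' \<Longrightarrow> y \<notin> set (removeAll x (fv M)) \<Longrightarrow>
          y \<notin> set (removeAll x' (fv M')) \<Longrightarrow>
          subst1 enc dec chi M x (Var y) = subst1 enc dec chi M' x' (Var y) \<Longrightarrow>
          alpha enc dec chi (Pi x A M) (Pi x' A' M')"

inductive beta :: "('v \<Rightarrow> nat) \<Rightarrow> (nat \<Rightarrow> 'v) \<Rightarrow> (nat list \<Rightarrow> nat)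
    \<Rightarrow> ('c, 'v) trm \<Rightarrow> ('c, 'v) trm \<Rightarrow> bool"
  for enc dec chi where
  b_contr: "beta enc dec chi (App (Lam x A M) N) (subst1 enc dec chi M x N)"
| b_lam_body: "beta enc dec chi M M' \<Longrightarrow> beta enc dec chi (Lam x A M) (Lam x A M')"
| b_pi_body: "beta enc dec chi M M' \<Longrightarrow> beta enc dec chi (Pi x A M) (Pi x A M')"
| b_lam_ty: "beta enc dec chi A A' \<Longrightarrow> beta enc dec chi (Lam x A M) (Lam x A' M)"
| b_pi_ty: "beta enc dec chi A A' \<Longrightarrow> beta enc dec chi (Pi x A M) (Pi x A' M)"
| b_app_l: "beta enc dec chi M N \<Longrightarrow> beta enc dec chi (App M P) (App N P)"
| b_app_r: "beta enc dec chi M N \<Longrightarrow> beta enc dec chi (App P M) (App P N)"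

definition betaconv :: "('v \<Rightarrow> nat) \<Rightarrow> (nat \<Rightarrow> 'v) \<Rightarrow> (nat list \<Rightarrow> nat)
    \<Rightarrow> ('c, 'v) trm \<Rightarrow> ('c, 'v) trm \<Rightarrow> bool" where
  "betaconv enc dec chi = equivclp (sup (alpha enc dec chi) (beta enc dec chi))"

type_synonym ('c, 'v) ctx = "('v \<times> ('c, 'v) trm) list"

inductive ctx_ok :: "('v \<Rightarrow> nat) \<Rightarrow> (nat \<Rightarrow> 'v) \<Rightarrow> (nat list \<Rightarrow> nat)
      \<Rightarrow> ('c \<Rightarrow> 'c \<Rightarrow> bool) \<Rightarrow> ('c \<Rightarrow> 'c \<Rightarrow> 'c \<Rightarrow> bool) \<Rightarrow> ('c, 'v) ctx \<Rightarrow> bool"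
  and typing :: "('v \<Rightarrow> nat) \<Rightarrow> (nat \<Rightarrow> 'v) \<Rightarrow> (nat list \<Rightarrow> nat)
      \<Rightarrow> ('c \<Rightarrow> 'c \<Rightarrow> bool) \<Rightarrow> ('c \<Rightarrow> 'c \<Rightarrow> 'c \<Rightarrow> bool)
      \<Rightarrow> ('c, 'v) ctx \<Rightarrow> ('c, 'v) trm \<Rightarrow> ('c, 'v) trm \<Rightarrow> bool"
  for enc dec chi Ax Rl where
  t_nil: "ctx_ok enc dec chi Ax Rl []"
| t_cons: "ctx_ok enc dec chi Ax Rl \<Gamma> \<Longrightarrow> typing enc dec chi Ax Rl \<Gamma> A (Const s) \<Longrightarrow>
           x \<notin> set (map fst \<Gamma>) \<Longrightarrow> ctx_ok enc dec chi Ax Rl ((x, A) # \<Gamma>)"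
| t_sort: "ctx_ok enc dec chi Ax Rl \<Gamma> \<Longrightarrow> Ax s1 s2 \<Longrightarrow>
           typing enc dec chi Ax Rl \<Gamma> (Const s1) (Const s2)"
| t_var: "ctx_ok enc dec chi Ax Rl \<Gamma> \<Longrightarrow> (x, A) \<in> set \<Gamma> \<Longrightarrow>
           typing enc dec chi Ax Rl \<Gamma> (Var x) A"
| t_prod: "Rl s1 s2 s3 \<Longrightarrow> typing enc dec chi Ax Rl \<Gamma> A (Const s1) \<Longrightarrow>
           (\<forall>y. y \<notin> set (map fst \<Gamma>) \<longrightarrow>
              typing enc dec chi Ax Rl ((y, A) # \<Gamma>) (subst1 enc dec chi B x (Var y)) (Const s2)) \<Longrightarrow>
           typing enc dec chi Ax Rl \<Gamma> (Pi x A B) (Const s3)"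
| t_abs: "Rl s1 s2 s3 \<Longrightarrow> typing enc dec chi Ax Rl \<Gamma> A (Const s1) \<Longrightarrow>
           (\<forall>z. z \<notin> set (map fst \<Gamma>) \<longrightarrow>
              typing enc dec chi Ax Rl ((z, A) # \<Gamma>) (subst1 enc dec chi B y (Var z)) (Const s2)) \<Longrightarrow>
           (\<forall>z. z \<notin> set (map fst \<Gamma>) \<longrightarrow>
              typing enc dec chi Ax Rl ((z, A) # \<Gamma>) (subst1 enc dec chi M x (Var z))
                 (subst1 enc dec chi B y (Var z))) \<Longrightarrow>
           typing enc dec chi Ax Rl \<Gamma> (Lam x A M) (Pi y A B)"
| t_app: "typing enc dec chi Ax Rl \<Gamma> M (Pi x A B) \<Longrightarrow> typing enc dec chi Ax Rl \<Gamma> N A \<Longrightarrow>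
           typing enc dec chi Ax Rl \<Gamma> (subst1 enc dec chi B x N) (Const s) \<Longrightarrow>
           typing enc dec chi Ax Rl \<Gamma> (App M N) (subst1 enc dec chi B x N)"
| t_conv: "typing enc dec chi Ax Rl \<Gamma> M A \<Longrightarrow> betaconv enc dec chi A B \<Longrightarrow>
           typing enc dec chi Ax Rl \<Gamma> B (Const s) \<Longrightarrow> typing enc dec chi Ax Rl \<Gamma> M B"

definition ctx_alpha :: "('v \<Rightarrow> nat) \<Rightarrow> (nat \<Rightarrow> 'v) \<Rightarrow> (nat list \<Rightarrow> nat)
    \<Rightarrow> ('c, 'v) ctx \<Rightarrow> ('c, 'v) ctx \<Rightarrow> bool" where
  "ctx_alpha enc dec chi \<Gamma> \<Delta> =
     list_all2 (\<lambda>(x, A) (y, B). x = y \<and> alpha enc dec chi A B) \<Gamma> \<Delta>"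

end

theory Submission
  imports Defs
begin

locale pts =
  fixes enc :: "'v \<Rightarrow> nat" and dec :: "nat \<Rightarrow> 'v" and chi :: "nat list \<Rightarrow> nat"
  assumes enc_dec: "\<forall>n. enc (dec n) = n"
    and chi_fresh: "\<forall>ns. chi ns \<notin> set ns"
begin

lemma Xp_fresh: "Xp enc dec chi xs \<notin> set xs"
proof
  assume "Xp enc dec chi xs \<in> set xs"
  then have "enc (dec (chi (map enc xs))) \<in> set (map enc xs)" unfolding Xp_def by simp
  then have "chi (map enc xs) \<in> set (map enc xs)" using enc_dec by simp
  then show False using chi_fresh by blast
qed

lemma Xs_fresh: "z \<in> set L \<Longrightarrow> Xs enc dec chi (\<sigma>::'v \<Rightarrow> ('c,'v) trm) L \<notin> set (fv (\<sigma> z))"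
  using Xp_fresh[of "concat (map (\<lambda>y. fv (\<sigma> y)) L)"] unfolding Xs_def by auto

lemma removeAll_concat_supd:
  assumes "\<forall>w\<in>set (removeAll x xs). y \<notin> set (fv (\<sigma> w))"
  shows "removeAll y (concat (map (\<lambda>w. fv (supd \<sigma> x (Var y) w)) xs))
        = concat (map (\<lambda>w. fv ((\<sigma>::'v \<Rightarrow> ('c,'v) trm) w)) (removeAll x xs))"
  using assms by (induction xs) (auto simp: supd_def removeAll_append)

lemma fv_sapp: "fv (sapp enc dec chi M \<sigma>) = concat (map (\<lambda>z. fv (\<sigma> z)) (fv M))"
proof (induction M arbitrary: \<sigma>)
  case (Lam x A M)
  let ?y = "Xs enc dec chi \<sigma> (removeAll x (fv M))"
  have "removeAll ?y (concat (map (\<lambda>w. fv (supd \<sigma> x (Var ?y) w)) (fv M)))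
        = concat (map (\<lambda>w. fv (\<sigma> w)) (removeAll x (fv M)))"
    apply (rule removeAll_concat_supd) using Xs_fresh[of _ "removeAll x (fv M)" \<sigma>] by simp
  then show ?case using Lam by (simp add: Let_def)
next
  case (Pi x A M)
  let ?y = "Xs enc dec chi \<sigma> (removeAll x (fv M))"
  have "removeAll ?y (concat (map (\<lambda>w. fv (supd \<sigma> x (Var ?y) w)) (fv M)))
        = concat (map (\<lambda>w. fv (\<sigma> w)) (removeAll x (fv M)))"
    apply (rule removeAll_concat_supd) using Xs_fresh[of _ "removeAll x (fv M)" \<sigma>] by simp
  then show ?case using Pi by (simp add: Let_def)
qed auto

lemma sapp_agree: "(\<forall>z\<in>set (fv M). \<sigma> z = \<tau> z) \<Longrightarrow> sapp enc dec chi M \<sigma> = sapp enc dec chi M \<tau>"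
proof (induction M arbitrary: \<sigma> \<tau>)
  case (Lam x A M)
  have e: "Xs enc dec chi \<sigma> (removeAll x (fv M)) = Xs enc dec chi \<tau> (removeAll x (fv M))"
  proof -
    have "map (\<lambda>y. fv (\<sigma> y)) (removeAll x (fv M)) = map (\<lambda>y. fv (\<tau> y)) (removeAll x (fv M))"
      using Lam.prems by simp
    then show ?thesis unfolding Xs_def by (simp only:)
  qed
  show ?case using Lam.prems unfolding sapp.simps Let_def e
    by (auto intro!: Lam.IH simp: supd_def)
next
  case (Pi x A M)
  have e: "Xs enc dec chi \<sigma> (removeAll x (fv M)) = Xs enc dec chi \<tau> (removeAll x (fv M))"
  proof -
    have "map (\<lambda>y. fv (\<sigma> y)) (removeAll x (fv M)) = map (\<lambda>y. fv (\<tau> y)) (removeAll x (fv M))"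
      using Pi.prems by simp
    then show ?thesis unfolding Xs_def by (simp only:)
  qed
  show ?case using Pi.prems unfolding sapp.simps Let_def e
    by (auto intro!: Pi.IH simp: supd_def)
qed auto

end

context pts begin

lemma concat_map_concat: "concat (map f (concat (map g L))) = concat (map (\<lambda>z. concat (map f (g z))) L)"
  by (induction L) auto

lemma comp_bind:
  fixes \<sigma> \<tau> :: "'v \<Rightarrow> ('c,'v) trm" and x :: 'v and M :: "('c,'v) trm" and y' :: 'v
  defines "y \<equiv> Xs enc dec chi \<sigma> (removeAll x (fv M))"
  shows "Xs enc dec chi \<tau> (removeAll y (fv (sapp enc dec chi M (supd \<sigma> x (Var y)))))
      = Xs enc dec chi (\<lambda>z. sapp enc dec chi (\<sigma> z) \<tau>) (removeAll x (fv M))"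
    and "\<forall>w\<in>set (fv M). sapp enc dec chi (supd \<sigma> x (Var y) w) (supd \<tau> y (Var y'))
             = supd (\<lambda>z. sapp enc dec chi (\<sigma> z) \<tau>) x (Var y') w"
proof -
  have "removeAll y (fv (sapp enc dec chi M (supd \<sigma> x (Var y))))
        = concat (map (\<lambda>w. fv (\<sigma> w)) (removeAll x (fv M)))"
    unfolding fv_sapp
    apply (rule removeAll_concat_supd) using Xs_fresh[of _ "removeAll x (fv M)" \<sigma>] y_def by simp
  then show "Xs enc dec chi \<tau> (removeAll y (fv (sapp enc dec chi M (supd \<sigma> x (Var y)))))
      = Xs enc dec chi (\<lambda>z. sapp enc dec chi (\<sigma> z) \<tau>) (removeAll x (fv M))"
    unfolding Xs_def by (simp add: fv_sapp concat_map_concat)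
  show "\<forall>w\<in>set (fv M). sapp enc dec chi (supd \<sigma> x (Var y) w) (supd \<tau> y (Var y'))
             = supd (\<lambda>z. sapp enc dec chi (\<sigma> z) \<tau>) x (Var y') w"
  proof
    fix w assume w: "w \<in> set (fv M)"
    show "sapp enc dec chi (supd \<sigma> x (Var y) w) (supd \<tau> y (Var y'))
             = supd (\<lambda>z. sapp enc dec chi (\<sigma> z) \<tau>) x (Var y') w"
    proof (cases "w = x")
      case True then show ?thesis by (simp add: supd_def)
    next
      case False
      then have "y \<notin> set (fv (\<sigma> w))" using Xs_fresh[of w "removeAll x (fv M)" \<sigma>] w y_def by simp
      then show ?thesis using False by (auto simp: supd_def intro!: sapp_agree)
    qed
  qed
qed

lemma sapp_comp: "sapp enc dec chi (sapp enc dec chi M \<sigma>) \<tau> = sapp enc dec chi M (\<lambda>z. sapp enc dec chi (\<sigma> z) \<tau>)"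
proof (induction M arbitrary: \<sigma> \<tau>)
  case (Lam x A M)
  show ?case
    apply (simp add: Let_def Lam.IH comp_bind(1))
    apply (rule sapp_agree)
    by (rule comp_bind(2))
next
  case (Pi x A M)
  show ?case
    apply (simp add: Let_def Pi.IH comp_bind(1))
    apply (rule sapp_agree)
    by (rule comp_bind(2))
qed auto

lemma rename:
  assumes "z \<notin> set (removeAll x (fv M))"
  shows "sapp enc dec chi (subst1 enc dec chi M x (Var z)) (supd \<sigma> z P) = sapp enc dec chi M (supd \<sigma> x P)"
  unfolding subst1_def sapp_comp
  apply (rule sapp_agree)
  using assms by (auto simp: supd_def)

end

context pts begin

lemma concat_map_single: "concat (map (\<lambda>w. fv (Var w :: ('c,'v) trm)) xs) = xs"
  by (induction xs) auto

lemma fv_subst_var: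
  assumes "z \<notin> set (removeAll x (fv (M::('c,'v) trm)))"
  shows "removeAll z (fv (subst1 enc dec chi M x (Var z))) = removeAll x (fv M)"
proof -
  have "removeAll z (concat (map (\<lambda>w. fv (supd (Var :: 'v \<Rightarrow> ('c,'v) trm) x (Var z) w)) (fv M)))
        = concat (map (\<lambda>w. fv (Var w :: ('c,'v) trm)) (removeAll x (fv M)))"
    by (rule removeAll_concat_supd) (use assms in auto)
  then show ?thesis unfolding subst1_def fv_sapp concat_map_single by simp
qed

lemma alpha_fv: "alpha enc dec chi M N \<Longrightarrow> fv M = fv N"
proof (induction rule: alpha.induct)
  case (a_lam A A' y x M x' M')
  then show ?case using fv_subst_var[of y x M] fv_subst_var[of y x' M'] by simp
next
  case (a_pi A A' y x M x' M')
  then show ?case using fv_subst_var[of y x M] fv_subst_var[of y x' M'] by simp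
qed auto

lemma alpha_bodyfv:
  assumes "y \<notin> set (removeAll x (fv M))" "y \<notin> set (removeAll x' (fv M'))"
    "subst1 enc dec chi M x (Var y) = subst1 enc dec chi M' x' (Var y)"
  shows "removeAll x (fv M) = removeAll x' (fv M')"
  using assms fv_subst_var[of y x M] fv_subst_var[of y x' M'] by simp

lemma alpha_bodyeq:
  assumes "y \<notin> set (removeAll x (fv M))" "y \<notin> set (removeAll x' (fv M'))"
    "subst1 enc dec chi M x (Var y) = subst1 enc dec chi M' x' (Var y)"
  shows "sapp enc dec chi M (supd \<sigma> x P) = sapp enc dec chi M' (supd \<sigma> x' P)"
  using rename[OF assms(1), of \<sigma> P] rename[OF assms(2), of \<sigma> P] assms(3) by simp

lemma alpha_sapp: "alpha enc dec chi M N \<Longrightarrow> sapp enc dec chi M \<sigma> = sapp enc dec chi N \<sigma>"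
proof (induction arbitrary: \<sigma> rule: alpha.induct)
  case (a_lam A A' y x M x' M')
  then show ?case using alpha_bodyfv[OF a_lam.hyps(2-4)] alpha_bodyeq[OF a_lam.hyps(2-4)]
    by (simp add: Let_def)
next
  case (a_pi A A' y x M x' M')
  then show ?case using alpha_bodyfv[OF a_pi.hyps(2-4)] alpha_bodyeq[OF a_pi.hyps(2-4)]
    by (simp add: Let_def)
qed auto

lemma alpha_refl: "alpha enc dec chi M M"
proof (induction M)
  case (Lam x A M)
  show ?case by (rule a_lam[OF Lam.IH(1) Xp_fresh Xp_fresh refl])
next
  case (Pi x A M)
  show ?case by (rule a_pi[OF Pi.IH(1) Xp_fresh Xp_fresh refl])
qed (auto intro: alpha.intros)

lemma alpha_body_all:
  assumes "y \<notin> set (removeAll x (fv M))" "y \<notin> set (removeAll x' (fv M'))"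
    "subst1 enc dec chi M x (Var y) = subst1 enc dec chi M' x' (Var y)"
  shows "subst1 enc dec chi M x (Var z) = subst1 enc dec chi M' x' (Var z)"
  unfolding subst1_def by (rule alpha_bodyeq[OF assms])

lemma alpha_subst_cong:
  "(\<forall>z\<in>set (fv B). alpha enc dec chi (\<sigma> z) (\<tau> z)) \<Longrightarrow>
    alpha enc dec chi (sapp enc dec chi B \<sigma>) (sapp enc dec chi B \<tau>)"
proof (induction B arbitrary: \<sigma> \<tau>)
  case (Lam x A M)
  have "map (\<lambda>y. fv (\<sigma> y)) (removeAll x (fv M)) = map (\<lambda>y. fv (\<tau> y)) (removeAll x (fv M))"
    using Lam.prems by (auto intro!: alpha_fv)
  then have e: "Xs enc dec chi \<sigma> (removeAll x (fv M)) = Xs enc dec chi \<tau> (removeAll x (fv M))"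
    unfolding Xs_def by (simp only:)
  define y where "y = Xs enc dec chi \<tau> (removeAll x (fv M))"
  have "alpha enc dec chi (sapp enc dec chi M (supd \<sigma> x (Var y))) (sapp enc dec chi M (supd \<tau> x (Var y)))"
    using Lam.prems by (auto intro!: Lam.IH(2) simp: supd_def alpha_refl)
  then have eq: "subst1 enc dec chi (sapp enc dec chi M (supd \<sigma> x (Var y))) y (Var y)
     = subst1 enc dec chi (sapp enc dec chi M (supd \<tau> x (Var y))) y (Var y)"
    unfolding subst1_def by (rule alpha_sapp)
  have "alpha enc dec chi (sapp enc dec chi A \<sigma>) (sapp enc dec chi A \<tau>)"
    using Lam.prems by (auto intro!: Lam.IH(1))
  then show ?case unfolding sapp.simps Let_def e y_def[symmetric]
    by (rule a_lam[where y=y]) (use eq in auto)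
next
  case (Pi x A M)
  have "map (\<lambda>y. fv (\<sigma> y)) (removeAll x (fv M)) = map (\<lambda>y. fv (\<tau> y)) (removeAll x (fv M))"
    using Pi.prems by (auto intro!: alpha_fv)
  then have e: "Xs enc dec chi \<sigma> (removeAll x (fv M)) = Xs enc dec chi \<tau> (removeAll x (fv M))"
    unfolding Xs_def by (simp only:)
  define y where "y = Xs enc dec chi \<tau> (removeAll x (fv M))"
  have "alpha enc dec chi (sapp enc dec chi M (supd \<sigma> x (Var y))) (sapp enc dec chi M (supd \<tau> x (Var y)))"
    using Pi.prems by (auto intro!: Pi.IH(2) simp: supd_def alpha_refl)
  then have eq: "subst1 enc dec chi (sapp enc dec chi M (supd \<sigma> x (Var y))) y (Var y)
     = subst1 enc dec chi (sapp enc dec chi M (supd \<tau> x (Var y))) y (Var y)"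
    unfolding subst1_def by (rule alpha_sapp)
  have "alpha enc dec chi (sapp enc dec chi A \<sigma>) (sapp enc dec chi A \<tau>)"
    using Pi.prems by (auto intro!: Pi.IH(1))
  then show ?case unfolding sapp.simps Let_def e y_def[symmetric]
    by (rule a_pi[where y=y]) (use eq in auto)
qed (auto intro: alpha.intros)

end


lemma alpha_Pi_inv: "alpha enc dec chi (Pi x A B) N \<Longrightarrow> \<exists>x' A' B' z. N = Pi x' A' B' \<and> alpha enc dec chi A A' \<and>
   z \<notin> set (removeAll x (fv B)) \<and> z \<notin> set (removeAll x' (fv B')) \<and>
   subst1 enc dec chi B x (Var z) = subst1 enc dec chi B' x' (Var z)"
  by (erule alpha.cases) blast+
lemma alpha_Lam_inv: "alpha enc dec chi (Lam x A B) N \<Longrightarrow> \<exists>x' A' B' z. N = Lam x' A' B' \<and> alpha enc dec chi A A' \<and>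
   z \<notin> set (removeAll x (fv B)) \<and> z \<notin> set (removeAll x' (fv B')) \<and>
   subst1 enc dec chi B x (Var z) = subst1 enc dec chi B' x' (Var z)"
  by (erule alpha.cases) blast+
lemma alpha_App_inv: "alpha enc dec chi (App M1 N1) N \<Longrightarrow> \<exists>M1' N1'. N = App M1' N1' \<and> alpha enc dec chi M1 M1' \<and>
   alpha enc dec chi N1 N1'"
  by (erule alpha.cases) blast+
lemma alpha_Var_inv: "alpha enc dec chi (Var x) N \<Longrightarrow> N = Var x"
  by (erule alpha.cases) blast+
lemma alpha_Const_inv: "alpha enc dec chi (Const k) N \<Longrightarrow> N = Const k"
  by (erule alpha.cases) blast+

lemma alpha_betaconv: "alpha enc dec chi B A \<Longrightarrow> betaconv enc dec chi A B"
  unfolding betaconv_def by (rule converse_r_into_equivclp) simp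

lemma weaken_aux:
  "typing enc dec chi Ax Rl \<Gamma> M A \<Longrightarrow>
   \<forall>\<Gamma>'. set \<Gamma> \<subseteq> set \<Gamma>' \<longrightarrow> ctx_ok enc dec chi Ax Rl \<Gamma>' \<longrightarrow> typing enc dec chi Ax Rl \<Gamma>' M A"
proof (induction rule: ctx_ok_typing.inducts(2)[where ?P1.0="\<lambda>_. True"])
  case (t_sort \<Gamma> s1 s2)
  then show ?case by (auto intro: ctx_ok_typing.t_sort)
next
  case (t_var \<Gamma> x A)
  then show ?case by (auto intro: ctx_ok_typing.t_var)
next
  case (t_prod s1 s2 s3 \<Gamma> A B x)
  show ?case
  proof (intro allI impI)
    fix \<Gamma>' assume s: "set \<Gamma> \<subseteq> set \<Gamma>'" and ok: "ctx_ok enc dec chi Ax Rl \<Gamma>'"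
    have tA: "typing enc dec chi Ax Rl \<Gamma>' A (Const s1)" using t_prod s ok by blast
    show "typing enc dec chi Ax Rl \<Gamma>' (Pi x A B) (Const s3)"
    proof (rule ctx_ok_typing.t_prod[OF t_prod(1) tA], intro allI impI)
      fix y assume y: "y \<notin> set (map fst \<Gamma>')"
      then have y': "y \<notin> set (map fst \<Gamma>)" using s by force
      have ok': "ctx_ok enc dec chi Ax Rl ((y, A) # \<Gamma>')" by (rule t_cons[OF ok tA y])
      show "typing enc dec chi Ax Rl ((y, A) # \<Gamma>') (subst1 enc dec chi B x (Var y)) (Const s2)"
      proof -
        have "set ((y, A) # \<Gamma>) \<subseteq> set ((y, A) # \<Gamma>')" using s by auto
        then show ?thesis using spec[OF t_prod(4), of y] y' ok' by blast
      qed
    qed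
  qed
next
  case (t_abs s1 s2 s3 \<Gamma> A B y M x)
  show ?case
  proof (intro allI impI)
    fix \<Gamma>' assume s: "set \<Gamma> \<subseteq> set \<Gamma>'" and ok: "ctx_ok enc dec chi Ax Rl \<Gamma>'"
    have tA: "typing enc dec chi Ax Rl \<Gamma>' A (Const s1)" using t_abs s ok by blast
    show "typing enc dec chi Ax Rl \<Gamma>' (Lam x A M) (Pi y A B)"
    proof (rule ctx_ok_typing.t_abs[OF t_abs(1) tA]; intro allI impI)
      fix z assume y: "z \<notin> set (map fst \<Gamma>')"
      then have y': "z \<notin> set (map fst \<Gamma>)" using s by force
      have ok': "ctx_ok enc dec chi Ax Rl ((z, A) # \<Gamma>')" by (rule t_cons[OF ok tA y])
      show "typing enc dec chi Ax Rl ((z, A) # \<Gamma>') (subst1 enc dec chi B y (Var z)) (Const s2)"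
      proof -
        have "set ((z, A) # \<Gamma>) \<subseteq> set ((z, A) # \<Gamma>')" using s by auto
        then show ?thesis using spec[OF t_abs(4), of z] y' ok' by blast
      qed
    next
      fix z assume y: "z \<notin> set (map fst \<Gamma>')"
      then have y': "z \<notin> set (map fst \<Gamma>)" using s by force
      have ok': "ctx_ok enc dec chi Ax Rl ((z, A) # \<Gamma>')" by (rule t_cons[OF ok tA y])
      show "typing enc dec chi Ax Rl ((z, A) # \<Gamma>') (subst1 enc dec chi M x (Var z)) (subst1 enc dec chi B y (Var z))"
      proof -
        have "set ((z, A) # \<Gamma>) \<subseteq> set ((z, A) # \<Gamma>')" using s by auto
        then show ?thesis using spec[OF t_abs(5), of z] y' ok' by blast
      qed
    qed
  qed
next
  case (t_app \<Gamma> M x A B N s)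
  then show ?case by (blast intro: ctx_ok_typing.t_app)
next
  case (t_conv \<Gamma> M A B s)
  then show ?case by (blast intro: ctx_ok_typing.t_conv)
qed auto

lemma weaken: "typing enc dec chi Ax Rl \<Gamma> M A \<Longrightarrow> set \<Gamma> \<subseteq> set \<Gamma>' \<Longrightarrow> ctx_ok enc dec chi Ax Rl \<Gamma>'
   \<Longrightarrow> typing enc dec chi Ax Rl \<Gamma>' M A"
  using weaken_aux by blast

lemma ctx_alpha_dom: "ctx_alpha enc dec chi \<Gamma> \<Delta> \<Longrightarrow> map fst \<Gamma> = map fst \<Delta>"
  unfolding ctx_alpha_def by (induction rule: list_all2_induct) auto

lemma ctx_alpha_mem: "ctx_alpha enc dec chi \<Gamma> \<Delta> \<Longrightarrow> (x, A) \<in> set \<Gamma> \<Longrightarrow> \<exists>B. (x, B) \<in> set \<Delta> \<and> alpha enc dec chi A B"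
  unfolding ctx_alpha_def by (induction rule: list_all2_induct) auto

lemma ctx_alpha_cons: "ctx_alpha enc dec chi ((x, A) # \<Gamma>) ((y, B) # \<Delta>) \<longleftrightarrow> x = y \<and> alpha enc dec chi A B \<and> ctx_alpha enc dec chi \<Gamma> \<Delta>"
  unfolding ctx_alpha_def by simp

lemma ctx_alpha_nil: "ctx_alpha enc dec chi [] \<Delta> \<longleftrightarrow> \<Delta> = []"
  unfolding ctx_alpha_def by simp

lemma ctx_alpha_consE: "ctx_alpha enc dec chi ((x, A) # \<Gamma>) \<Delta> \<Longrightarrow> \<exists>B \<Delta>'. \<Delta> = (x, B) # \<Delta>' \<and> alpha enc dec chi A B \<and> ctx_alpha enc dec chi \<Gamma> \<Delta>'"
  unfolding ctx_alpha_def by (cases \<Delta>) auto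


context pts begin

lemma main:
  fixes Ax :: "'c \<Rightarrow> 'c \<Rightarrow> bool" and Rl :: "'c \<Rightarrow> 'c \<Rightarrow> 'c \<Rightarrow> bool"
    and \<Gamma> :: "('c, 'v) ctx"
  shows "ctx_ok enc dec chi Ax Rl \<Gamma> \<Longrightarrow> \<forall>\<Delta>. ctx_alpha enc dec chi \<Gamma> \<Delta> \<longrightarrow> ctx_ok enc dec chi Ax Rl \<Delta> \<and>
            (\<forall>x A. (x, A) \<in> set \<Gamma> \<longrightarrow> (\<exists>s. typing enc dec chi Ax Rl \<Delta> A (Const s)))"
    and "typing enc dec chi Ax Rl \<Gamma> M A \<Longrightarrow> \<forall>\<Delta> N. ctx_alpha enc dec chi \<Gamma> \<Delta> \<longrightarrow> alpha enc dec chi M N \<longrightarrow>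
            typing enc dec chi Ax Rl \<Delta> N A"
proof (induction rule: ctx_ok_typing.inducts)
  case t_nil
  then show ?case by (auto simp: ctx_alpha_nil intro: ctx_ok_typing.t_nil)
next
  case (t_cons \<Gamma> A s x)
  show ?case
  proof (intro allI impI)
    fix \<Delta> assume ca: "ctx_alpha enc dec chi ((x, A) # \<Gamma>) \<Delta>"
    then obtain B \<Delta>' where D: "\<Delta> = (x, B) # \<Delta>'" and ab: "alpha enc dec chi A B"
      and ca': "ctx_alpha enc dec chi \<Gamma> \<Delta>'" using ctx_alpha_consE[OF ca] by blast
    have ok': "ctx_ok enc dec chi Ax Rl \<Delta>'" using t_cons(2) ca' by blast
    have tB: "typing enc dec chi Ax Rl \<Delta>' B (Const s)" using t_cons(4) ca' ab by blast
    have xf: "x \<notin> set (map fst \<Delta>')" using t_cons(5) ctx_alpha_dom[OF ca'] by simp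
    have ok: "ctx_ok enc dec chi Ax Rl \<Delta>" unfolding D by (rule ctx_ok_typing.t_cons[OF ok' tB xf])
    have sub: "set \<Delta>' \<subseteq> set \<Delta>" unfolding D by auto
    have "\<forall>x0 A0. (x0, A0) \<in> set ((x, A) # \<Gamma>) \<longrightarrow> (\<exists>s. typing enc dec chi Ax Rl \<Delta> A0 (Const s))"
    proof (intro allI impI)
      fix x0 A0 assume "(x0, A0) \<in> set ((x, A) # \<Gamma>)"
      then consider "A0 = A" | "(x0, A0) \<in> set \<Gamma>" by auto
      then show "\<exists>s. typing enc dec chi Ax Rl \<Delta> A0 (Const s)"
      proof cases
        case 1
        have "typing enc dec chi Ax Rl \<Delta>' A (Const s)" using t_cons(4) ca' alpha_refl by blast
        then show ?thesis using 1 weaken[OF _ sub ok] by blast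
      next
        case 2
        then obtain s' where "typing enc dec chi Ax Rl \<Delta>' A0 (Const s')" using t_cons(2) ca' by blast
        then show ?thesis using weaken[OF _ sub ok] by blast
      qed
    qed
    then show "ctx_ok enc dec chi Ax Rl \<Delta> \<and> (\<forall>x0 A0. (x0, A0) \<in> set ((x, A) # \<Gamma>) \<longrightarrow>
         (\<exists>s. typing enc dec chi Ax Rl \<Delta> A0 (Const s)))" using ok by blast
  qed
next
  case (t_sort \<Gamma> s1 s2)
  then show ?case by (auto dest!: alpha_Const_inv intro: ctx_ok_typing.t_sort)
next
  case (t_var \<Gamma> x A)
  show ?case
  proof (intro allI impI)
    fix \<Delta> and N :: "('c, 'v) trm" assume ca: "ctx_alpha enc dec chi \<Gamma> \<Delta>" and al: "alpha enc dec chi (Var x) N"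
    then have N: "N = Var x" by (auto dest: alpha_Var_inv)
    obtain B where B: "(x, B) \<in> set \<Delta>" "alpha enc dec chi A B" using ctx_alpha_mem[OF ca t_var(3)] by blast
    have ok: "ctx_ok enc dec chi Ax Rl \<Delta>" and "\<exists>s. typing enc dec chi Ax Rl \<Delta> A (Const s)"
      using t_var(2) ca t_var(3) by blast+
    then obtain s where tA: "typing enc dec chi Ax Rl \<Delta> A (Const s)" by blast
    have "typing enc dec chi Ax Rl \<Delta> (Var x) B" by (rule ctx_ok_typing.t_var[OF ok B(1)])
    then show "typing enc dec chi Ax Rl \<Delta> N A" unfolding N
      by (rule ctx_ok_typing.t_conv[OF _ alpha_betaconv[OF B(2)] tA])
  qed
next
  case (t_prod s1 s2 s3 \<Gamma> A B x)
  show ?case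
  proof (intro allI impI)
    fix \<Delta> and N :: "('c, 'v) trm" assume ca: "ctx_alpha enc dec chi \<Gamma> \<Delta>" and al: "alpha enc dec chi (Pi x A B) N"
    obtain x' A' B' z where N: "N = Pi x' A' B'" and aA: "alpha enc dec chi A A'"
      and z: "z \<notin> set (removeAll x (fv B))" "z \<notin> set (removeAll x' (fv B'))"
      "subst1 enc dec chi B x (Var z) = subst1 enc dec chi B' x' (Var z)"
      using alpha_Pi_inv[OF al] by blast
    have tA': "typing enc dec chi Ax Rl \<Delta> A' (Const s1)" using t_prod(3) ca aA by blast
    show "typing enc dec chi Ax Rl \<Delta> N (Const s3)" unfolding N
    proof (rule ctx_ok_typing.t_prod[OF t_prod(1) tA']; intro allI impI)
      fix y assume y: "y \<notin> set (map fst \<Delta>)"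
      then have y': "y \<notin> set (map fst \<Gamma>)" using ctx_alpha_dom[OF ca] by simp
      have ca2: "ctx_alpha enc dec chi ((y, A) # \<Gamma>) ((y, A') # \<Delta>)" using ca aA by (simp add: ctx_alpha_cons)
      have eq: "subst1 enc dec chi B x (Var y) = subst1 enc dec chi B' x' (Var y)"
        by (rule alpha_body_all[OF z])
      show "typing enc dec chi Ax Rl ((y, A') # \<Delta>) (subst1 enc dec chi B' x' (Var y)) (Const s2)"
      proof -
        have "\<forall>\<Delta> N. ctx_alpha enc dec chi ((y, A) # \<Gamma>) \<Delta> \<longrightarrow> alpha enc dec chi (subst1 enc dec chi B x (Var y)) N \<longrightarrow>
            typing enc dec chi Ax Rl \<Delta> N (Const s2)" using t_prod(4) y' by blast
        then have "typing enc dec chi Ax Rl ((y, A') # \<Delta>) (subst1 enc dec chi B x (Var y)) (Const s2)"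
          using ca2 alpha_refl by blast
        then show ?thesis using eq by simp
      qed
    qed
  qed
next
  case (t_abs s1 s2 s3 \<Gamma> A B y M x)
  show ?case
  proof (intro allI impI)
    fix \<Delta> and N :: "('c, 'v) trm" assume ca: "ctx_alpha enc dec chi \<Gamma> \<Delta>" and al: "alpha enc dec chi (Lam x A M) N"
    obtain x' A' M' w where N: "N = Lam x' A' M'" and aA: "alpha enc dec chi A A'"
      and w: "w \<notin> set (removeAll x (fv M))" "w \<notin> set (removeAll x' (fv M'))"
      "subst1 enc dec chi M x (Var w) = subst1 enc dec chi M' x' (Var w)"
      using alpha_Lam_inv[OF al] by blast
    have tA': "typing enc dec chi Ax Rl \<Delta> A' (Const s1)" using t_abs(3) ca aA by blast
    have tA: "typing enc dec chi Ax Rl \<Delta> A (Const s1)" using t_abs(3) ca alpha_refl by blast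
    have dom: "\<And>z. z \<notin> set (map fst \<Delta>) \<Longrightarrow> z \<notin> set (map fst \<Gamma>)" using ctx_alpha_dom[OF ca] by simp
    have t1: "typing enc dec chi Ax Rl \<Delta> (Lam x' A' M') (Pi y A' B)"
    proof (rule ctx_ok_typing.t_abs[OF t_abs(1) tA']; intro allI impI)
      fix z assume z: "z \<notin> set (map fst \<Delta>)"
      have ca2: "ctx_alpha enc dec chi ((z, A) # \<Gamma>) ((z, A') # \<Delta>)" using ca aA by (simp add: ctx_alpha_cons)
      show "typing enc dec chi Ax Rl ((z, A') # \<Delta>) (subst1 enc dec chi B y (Var z)) (Const s2)"
      proof -
        have "\<forall>\<Delta> N. ctx_alpha enc dec chi ((z, A) # \<Gamma>) \<Delta> \<longrightarrow> alpha enc dec chi (subst1 enc dec chi B y (Var z)) N \<longrightarrow>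
            typing enc dec chi Ax Rl \<Delta> N (Const s2)" using t_abs(4) dom[OF z] by blast
        then show ?thesis using ca2 alpha_refl by blast
      qed
    next
      fix z assume z: "z \<notin> set (map fst \<Delta>)"
      have ca2: "ctx_alpha enc dec chi ((z, A) # \<Gamma>) ((z, A') # \<Delta>)" using ca aA by (simp add: ctx_alpha_cons)
      have eq: "subst1 enc dec chi M x (Var z) = subst1 enc dec chi M' x' (Var z)"
        by (rule alpha_body_all[OF w])
      show "typing enc dec chi Ax Rl ((z, A') # \<Delta>) (subst1 enc dec chi M' x' (Var z)) (subst1 enc dec chi B y (Var z))"
      proof -
        have "\<forall>\<Delta> N. ctx_alpha enc dec chi ((z, A) # \<Gamma>) \<Delta> \<longrightarrow> alpha enc dec chi (subst1 enc dec chi M x (Var z)) N \<longrightarrow>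
            typing enc dec chi Ax Rl \<Delta> N (subst1 enc dec chi B y (Var z))" using t_abs(5) dom[OF z] by blast
        then have "typing enc dec chi Ax Rl ((z, A') # \<Delta>) (subst1 enc dec chi M x (Var z)) (subst1 enc dec chi B y (Var z))"
          using ca2 alpha_refl by blast
        then show ?thesis using eq by simp
      qed
    qed
    have t2: "typing enc dec chi Ax Rl \<Delta> (Pi y A B) (Const s3)"
    proof (rule ctx_ok_typing.t_prod[OF t_abs(1) tA]; intro allI impI)
      fix z assume z: "z \<notin> set (map fst \<Delta>)"
      have ca2: "ctx_alpha enc dec chi ((z, A) # \<Gamma>) ((z, A) # \<Delta>)" using ca by (simp add: ctx_alpha_cons alpha_refl)
      show "typing enc dec chi Ax Rl ((z, A) # \<Delta>) (subst1 enc dec chi B y (Var z)) (Const s2)"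
      proof -
        have "\<forall>\<Delta> N. ctx_alpha enc dec chi ((z, A) # \<Gamma>) \<Delta> \<longrightarrow> alpha enc dec chi (subst1 enc dec chi B y (Var z)) N \<longrightarrow>
            typing enc dec chi Ax Rl \<Delta> N (Const s2)" using t_abs(4) dom[OF z] by blast
        then show ?thesis using ca2 alpha_refl by blast
      qed
    qed
    have "alpha enc dec chi (Pi y A B) (Pi y A' B)"
      by (rule a_pi[OF aA, where y=y]) auto
    then have "betaconv enc dec chi (Pi y A' B) (Pi y A B)" by (rule alpha_betaconv)
    then show "typing enc dec chi Ax Rl \<Delta> N (Pi y A B)" unfolding N
      by (rule ctx_ok_typing.t_conv[OF t1 _ t2])
  qed
next
  case (t_app \<Gamma> M1 x A B N1 s)
  show ?case
  proof (intro allI impI)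
    fix \<Delta> and N :: "('c, 'v) trm" assume ca: "ctx_alpha enc dec chi \<Gamma> \<Delta>" and al: "alpha enc dec chi (App M1 N1) N"
    obtain M1' N1' where N: "N = App M1' N1'" and a1: "alpha enc dec chi M1 M1'"
      and a2: "alpha enc dec chi N1 N1'"
      using alpha_App_inv[OF al] by blast
    have tM: "typing enc dec chi Ax Rl \<Delta> M1' (Pi x A B)" using t_app(2) ca a1 by blast
    have tN: "typing enc dec chi Ax Rl \<Delta> N1' A" using t_app(4) ca a2 by blast
    have tB: "typing enc dec chi Ax Rl \<Delta> (subst1 enc dec chi B x N1) (Const s)"
      using t_app(6) ca alpha_refl by blast
    have aB: "alpha enc dec chi (subst1 enc dec chi B x N1) (subst1 enc dec chi B x N1')"
      unfolding subst1_def
      by (rule alpha_subst_cong) (auto simp: supd_def a2 alpha_refl)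
    have tB': "typing enc dec chi Ax Rl \<Delta> (subst1 enc dec chi B x N1') (Const s)"
      using t_app(6) ca aB by blast
    have "typing enc dec chi Ax Rl \<Delta> (App M1' N1') (subst1 enc dec chi B x N1')"
      by (rule ctx_ok_typing.t_app[OF tM tN tB'])
    then show "typing enc dec chi Ax Rl \<Delta> N (subst1 enc dec chi B x N1)" unfolding N
      by (rule ctx_ok_typing.t_conv[OF _ alpha_betaconv[OF aB] tB])
  qed
next
  case (t_conv \<Gamma> M A B s)
  show ?case
  proof (intro allI impI)
    fix \<Delta> and N :: "('c, 'v) trm" assume ca: "ctx_alpha enc dec chi \<Gamma> \<Delta>" and al: "alpha enc dec chi M N"
    have t1: "typing enc dec chi Ax Rl \<Delta> N A" using t_conv(2) ca al by blast
    have t2: "typing enc dec chi Ax Rl \<Delta> B (Const s)" using t_conv(5) ca alpha_refl by blast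
    show "typing enc dec chi Ax Rl \<Delta> N B" by (rule ctx_ok_typing.t_conv[OF t1 t_conv(3) t2])
  qed
qed

end

theorem mainTheorem14:
  fixes enc :: "'v \<Rightarrow> nat" and dec :: "nat \<Rightarrow> 'v" and chi :: "nat list \<Rightarrow> nat"
    and Ax :: "'c \<Rightarrow> 'c \<Rightarrow> bool" and Rl :: "'c \<Rightarrow> 'c \<Rightarrow> 'c \<Rightarrow> bool"
  assumes enc_dec: "\<forall>n. enc (dec n) = n"
    and chi_fresh: "\<forall>ns. chi ns \<notin> set ns"
  shows "(\<forall>(\<Gamma>::('c, 'v) ctx) \<Delta>. ctx_alpha enc dec chi \<Gamma> \<Delta> \<and> ctx_ok enc dec chi Ax Rl \<Gamma>
            \<longrightarrow> ctx_ok enc dec chi Ax Rl \<Delta>)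
       \<and> (\<forall>(\<Gamma>::('c, 'v) ctx) \<Delta> M N A. ctx_alpha enc dec chi \<Gamma> \<Delta> \<and> alpha enc dec chi M N
            \<and> typing enc dec chi Ax Rl \<Gamma> M A \<longrightarrow> typing enc dec chi Ax Rl \<Delta> N A)"
proof -
  interpret pts enc dec chi using enc_dec chi_fresh by unfold_locales
  show ?thesis using main[of Ax Rl] by blast
qed

end
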